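(* Let $f$ be a $C^{(3)}$ function on an open interval containing $0$ with $f(0)=f'(0)=0$ and $f''>0$, so that its graph is locally a strictly convex curve $X$ tangent to the $x$-axis at the origin $P=(0,0)$, with curvature $\kappa(P)=f''(0)$ there. For sufficiently small $h>0$ let $s=s(h)<0<t=t(h)$ be the numbers with $f(s)=f(t)=h$, and define $$\alpha_P(h)=\sqrt{h}\,\frac{f'(t)-f'(s)}{-f'(s)f'(t)}.$$ Then $$\lim_{h\to 0^+}\alpha_P(h)=\frac{\sqrt{2}}{\sqrt{\kappa(P)}}.$$ *)

theory Defs
  imports "HOL-Analysis.Analysis"
begin

end

theory Submission
  imports Defs
begin

theorem lemma5:
  fixes f f1 f2 f3 s t :: "real \<Rightarrow> real" and a b :: real
  assumes ab: "a < 0" "0 < b"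
    and d1: "\<And>x. x \<in> {a<..<b} \<Longrightarrow> (f has_real_derivative f1 x) (at x)"
    and d2: "\<And>x. x \<in> {a<..<b} \<Longrightarrow> (f1 has_real_derivative f2 x) (at x)"
    and d3: "\<And>x. x \<in> {a<..<b} \<Longrightarrow> (f2 has_real_derivative f3 x) (at x)"
    and c3: "continuous_on {a<..<b} f3"
    and f0: "f 0 = 0" and f10: "f1 0 = 0"
    and convex: "\<And>x. x \<in> {a<..<b} \<Longrightarrow> f2 x > 0"
    and s: "eventually (\<lambda>h. s h \<in> {a<..<0} \<and> f (s h) = h) (at_right 0)"
    and t: "eventually (\<lambda>h. t h \<in> {0<..<b} \<and> f (t h) = h) (at_right 0)"
  shows "((\<lambda>h. sqrt h * (f1 (t h) - f1 (s h)) / (- (f1 (s h) * f1 (t h))))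
           \<longlongrightarrow> sqrt 2 / sqrt (f2 0)) (at_right 0)"
proof -
  define k where "k = f2 0"
  have k: "k > 0" using convex ab unfolding k_def by auto
  have pos1: "f1 x > 0" if "0 < x" "x < b" for x
  proof -
    have "\<exists>z. 0 < z \<and> z < x \<and> f1 x - f1 0 = (x - 0) * f2 z"
      by (rule MVT2) (use d2 that ab in auto)
    then obtain z where "0 < z" "z < x" "f1 x - f1 0 = (x - 0) * f2 z" by blast
    moreover have "f2 z > 0" using convex calculation that ab by auto
    ultimately show ?thesis using f10 that by simp
  qed
  have neg1: "f1 x < 0" if "a < x" "x < 0" for x
  proof -
    have "\<exists>z. x < z \<and> z < 0 \<and> f1 0 - f1 x = (0 - x) * f2 z"
      by (rule MVT2) (use d2 that ab in auto)
    then obtain z where "x < z" "z < 0" "f1 0 - f1 x = (0 - x) * f2 z" by blast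
    moreover have "f2 z > 0" using convex calculation that ab by auto
    ultimately show ?thesis using f10 that by (simp add: mult_pos_pos mult_neg_pos mult_pos_neg)
  qed
  have incr: "f x < f y" if "0 \<le> x" "x < y" "y < b" for x y
  proof -
    have "\<exists>z. x < z \<and> z < y \<and> f y - f x = (y - x) * f1 z"
      by (rule MVT2) (use d1 that ab in auto)
    then obtain z where "x < z" "z < y" "f y - f x = (y - x) * f1 z" by blast
    moreover have "f1 z > 0" using pos1 calculation that by auto
    ultimately have "(y - x) * f1 z > 0" by (intro mult_pos_pos) auto
    thus ?thesis using \<open>f y - f x = (y - x) * f1 z\<close> by linarith
  qed
  have decr: "f x > f y" if "a < x" "x < y" "y \<le> 0" for x y
  proof -
    have "\<exists>z. x < z \<and> z < y \<and> f y - f x = (y - x) * f1 z"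
      by (rule MVT2) (use d1 that ab in auto)
    then obtain z where "x < z" "z < y" "f y - f x = (y - x) * f1 z" by blast
    moreover have "f1 z < 0" using neg1 calculation that by auto
    ultimately have "(y - x) * f1 z < 0" by (intro mult_pos_neg) auto
    thus ?thesis using \<open>f y - f x = (y - x) * f1 z\<close> by linarith
  qed
  have fpos: "f x > 0" if "a < x" "x < b" "x \<noteq> 0" for x
  proof (cases "x > 0")
    case True thus ?thesis using incr[of 0 x] that f0 by auto
  next
    case False thus ?thesis using decr[of x 0] that f0 by auto
  qed
  have near0: "eventually (\<lambda>x. a < x \<and> x < b \<and> x \<noteq> 0) (at (0::real))"
    unfolding eventually_at by (rule exI[of _ "min (-a) b"]) (use ab in \<open>auto simp: dist_real_def\<close>)
  have in0: "(0::real) \<in> {a<..<b}" using ab by auto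
  have cf: "isCont f 0" using d1[OF in0] by (rule DERIV_isCont)
  have cf1: "isCont f1 0" using d2[OF in0] by (rule DERIV_isCont)
  have cf2: "isCont f2 0" using d3[OF in0] by (rule DERIV_isCont)
  have g: "((\<lambda>x. f1 x ^ 2 / f x) \<longlongrightarrow> 2 * k) (at 0)"
  proof (rule lhopital[where f' = "\<lambda>x. 2 * f1 x * f2 x" and g' = f1])
    show "((\<lambda>x. f1 x ^ 2) \<longlongrightarrow> 0) (at 0)"
      using cf1 f10 by (metis (no_types) isCont_def tendsto_power power_zero_numeral)
    show "(f \<longlongrightarrow> 0) (at 0)" using cf f0 by (simp add: isCont_def)
    show "\<forall>\<^sub>F x in at 0. f x \<noteq> 0"
      using near0 by (rule eventually_mono) (metis fpos less_irrefl)
    show "\<forall>\<^sub>F x in at 0. f1 x \<noteq> 0"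
      using near0 by (rule eventually_mono) (metis linorder_neqE_linordered_idom pos1 neg1 less_irrefl)
    show "\<forall>\<^sub>F x in at 0. (f has_real_derivative f1 x) (at x)"
      using near0 by (rule eventually_mono) (simp add: d1)
    show "\<forall>\<^sub>F x in at 0. ((\<lambda>x. f1 x ^ 2) has_real_derivative 2 * f1 x * f2 x) (at x)"
      using near0 by (rule eventually_mono) (auto intro!: derivative_eq_intros d2 simp: power2_eq_square)
    have "((\<lambda>x. 2 * f2 x) \<longlongrightarrow> 2 * k) (at 0)"
      using cf2 unfolding k_def isCont_def by (intro tendsto_mult) auto
    moreover have "\<forall>\<^sub>F x in at 0. 2 * f2 x = 2 * f1 x * f2 x / f1 x"
      using near0 by (rule eventually_mono) (metis linorder_neqE_linordered_idom pos1 neg1 less_irrefl nonzero_mult_div_cancel_right mult.assoc mult.commute)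
    ultimately show "((\<lambda>x. 2 * f1 x * f2 x / f1 x) \<longlongrightarrow> 2 * k) (at 0)"
      by (rule Lim_transform_eventually)
  qed
  have hpos: "eventually (\<lambda>h::real. 0 < h) (at_right 0)"
    by (simp add: eventually_at_right_less)
  have tlim: "filterlim t (at 0) (at_right 0)"
    unfolding filterlim_at
  proof
    show "eventually (\<lambda>h. t h \<in> UNIV \<and> t h \<noteq> 0) (at_right 0)"
      using t by (rule eventually_mono) auto
    show "(t \<longlongrightarrow> 0) (at_right 0)"
    proof (rule order_tendstoI)
      fix e :: real assume e0: "e < 0"
      show "eventually (\<lambda>h. e < t h) (at_right 0)"
        using t by (rule eventually_mono) (use e0 in auto)
    next
      fix e :: real assume e: "0 < e"
      define e' where "e' = min e (b/2)"
      have e': "0 < e'" "e' < b" "e' \<le> e" using e ab by (auto simp: e'_def)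
      have fe: "f e' > 0" using fpos e' ab by auto
      have "eventually (\<lambda>h. h < f e') (at_right 0)"
        using order_tendstoD(2)[OF tendsto_ident_at fe] .
      then show "eventually (\<lambda>h. t h < e) (at_right 0)" using t
      proof eventually_elim
        case (elim h)
        show ?case
        proof (rule ccontr)
          assume "\<not> t h < e"
          hence "e' \<le> t h" using e' by auto
          hence "f e' \<le> f (t h)" using incr[of e' "t h"] e' elim by (cases "e' = t h") auto
          thus False using elim by auto
        qed
      qed
    qed
  qed
  have slim: "filterlim s (at 0) (at_right 0)"
    unfolding filterlim_at
  proof
    show "eventually (\<lambda>h. s h \<in> UNIV \<and> s h \<noteq> 0) (at_right 0)"
      using s by (rule eventually_mono) auto
    show "(s \<longlongrightarrow> 0) (at_right 0)"
    proof (rule order_tendstoI)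
      fix e :: real assume e0: "e > 0"
      show "eventually (\<lambda>h. s h < e) (at_right 0)"
        using s by (rule eventually_mono) (use e0 in auto)
    next
      fix e :: real assume e: "e < 0"
      define e' where "e' = max e (a/2)"
      have e': "e' < 0" "a < e'" "e \<le> e'" using e ab by (auto simp: e'_def)
      have fe: "f e' > 0" using fpos e' ab by auto
      have "eventually (\<lambda>h. h < f e') (at_right 0)"
        using order_tendstoD(2)[OF tendsto_ident_at fe] .
      then show "eventually (\<lambda>h. e < s h) (at_right 0)" using s
      proof eventually_elim
        case (elim h)
        show ?case
        proof (rule ccontr)
          assume "\<not> e < s h"
          hence "s h \<le> e'" using e' by auto
          hence "f e' \<le> f (s h)" using decr[of "s h" e'] e' elim by (cases "e' = s h") auto
          thus False using elim by auto
        qed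
      qed
    qed
  qed
  have k2: "sqrt (2 * k) \<noteq> 0" using k by simp
  have gt: "((\<lambda>h. f1 (t h) ^ 2 / f (t h)) \<longlongrightarrow> 2 * k) (at_right 0)"
    using filterlim_compose[OF g tlim] by simp
  have "((\<lambda>h. f1 (t h) ^ 2 / h) \<longlongrightarrow> 2 * k) (at_right 0)"
    using gt by (rule Lim_transform_eventually) (use t in \<open>rule eventually_mono, auto\<close>)
  hence "((\<lambda>h. 1 / sqrt (f1 (t h) ^ 2 / h)) \<longlongrightarrow> 1 / sqrt (2 * k)) (at_right 0)"
    by (intro tendsto_divide tendsto_const tendsto_real_sqrt k2)
  hence A: "((\<lambda>h. sqrt h / f1 (t h)) \<longlongrightarrow> 1 / sqrt (2 * k)) (at_right 0)"
  proof (rule Lim_transform_eventually)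
    show "\<forall>\<^sub>F h in at_right 0. 1 / sqrt (f1 (t h) ^ 2 / h) = sqrt h / f1 (t h)"
      using t hpos
    proof eventually_elim
      case (elim h)
      hence "f1 (t h) > 0" using pos1 by auto
      thus ?case by (simp add: real_sqrt_divide)
    qed
  qed
  have gs: "((\<lambda>h. f1 (s h) ^ 2 / f (s h)) \<longlongrightarrow> 2 * k) (at_right 0)"
    using filterlim_compose[OF g slim] by simp
  have "((\<lambda>h. f1 (s h) ^ 2 / h) \<longlongrightarrow> 2 * k) (at_right 0)"
    using gs by (rule Lim_transform_eventually) (use s in \<open>rule eventually_mono, auto\<close>)
  hence "((\<lambda>h. 1 / sqrt (f1 (s h) ^ 2 / h)) \<longlongrightarrow> 1 / sqrt (2 * k)) (at_right 0)"
    by (intro tendsto_divide tendsto_const tendsto_real_sqrt k2)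
  hence B: "((\<lambda>h. sqrt h / (- f1 (s h))) \<longlongrightarrow> 1 / sqrt (2 * k)) (at_right 0)"
  proof (rule Lim_transform_eventually)
    show "\<forall>\<^sub>F h in at_right 0. 1 / sqrt (f1 (s h) ^ 2 / h) = sqrt h / (- f1 (s h))"
      using s hpos
    proof eventually_elim
      case (elim h)
      hence "f1 (s h) < 0" using neg1 by auto
      thus ?case by (simp add: real_sqrt_divide)
    qed
  qed
  have C: "((\<lambda>h. sqrt h / f1 (t h) + sqrt h / (- f1 (s h))) \<longlongrightarrow> 1 / sqrt (2 * k) + 1 / sqrt (2 * k)) (at_right 0)"
    using A B by (rule tendsto_add)
  have eqv: "1 / sqrt (2 * k) + 1 / sqrt (2 * k) = sqrt 2 / sqrt (f2 0)"
  proof -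
    have "sqrt (2 * k) = sqrt 2 * sqrt k" by (simp add: real_sqrt_mult)
    moreover have "sqrt 2 * sqrt 2 = (2::real)" by simp
    ultimately show ?thesis using k unfolding k_def[symmetric]
      by (simp add: field_simps)
  qed
  show ?thesis
    unfolding eqv[symmetric]
    using C
  proof (rule Lim_transform_eventually)
    show "\<forall>\<^sub>F h in at_right 0. sqrt h / f1 (t h) + sqrt h / (- f1 (s h)) =
        sqrt h * (f1 (t h) - f1 (s h)) / (- (f1 (s h) * f1 (t h)))"
      using s t
    proof eventually_elim
      case (elim h)
      hence "f1 (t h) > 0" "f1 (s h) < 0" using pos1 neg1 by auto
      thus ?case by (simp add: field_simps)
    qed
  qed
qed

end
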